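(* Under the assumptions below, the entries of the bidiagonal factors of $\mathscr T_N$ are given by \[ U_{b,n}=-\frac{\tau^B_{b-1,n}\,\tau^B_{b,n+1}}{\tau^B_{b-1,n+1}\,\tau^B_{b,n}},\qquad b\in\{1,\dots,q\},\ n\in\{0,1,\dots,N-b-1\}, \] \[ L_{a,n+1}=-\frac{\tau^A_{a-1,n+2}\,\tau^A_{a,n}}{\tau^A_{a-1,n+1}\,\tau^A_{a,n+1}},\qquad a\in\{1,\dots,p\},\ n\in\{0,1,\dots,N-a-1\}. \]
   Context: Let $p,q\in\mathbb N$ and let $\mu=(\mu_{i,j})$ be a $q\times p$ matrix of measures on $\mathbb R$. For $r,M\in\mathbb N$ let $X^{[M]}_{[r]}(x)$ be the $M\times r$ matrix of monomials whose row $i$ ($i=0,1,\dots,M-1$) is $x^{\lfloor i/r\rfloor}e_{(i \bmod r)+1}^\top$ (i.e. the first $M$ rows of the block column $I_r, xI_r, x^2I_r,\dots$). For $N,M\in\mathbb N$ put $\mathscr M^{[N,M]}=\int X^{[N]}_{[q]}(x)\,\mathrm d\mu(x)\,\big(X^{[M]}_{[p]}(x)\big)^\top$ and $\mathscr M_N=\mathscr M^{[N,N]}$. Assume $\mathscr M_N$ has a Gauss--Borel factorization $\mathscr M_N=\mathscr L_N^{-1}\mathscr U_N^{-1}$ with $\mathscr L_N$ lower unitriangular and $\mathscr U_N$ nonsingular upper triangular. Define the polynomial matrices $B^{[N]}=\mathscr L_N X^{[N]}_{[q]}$ (an $N\times q$ matrix with entries $B^{(j)}_n(x)$, row $n\in\{0,\dots,N-1\}$,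 column $j\in\{1,\dots,q\}$) and $A^{[N]}=\big(X^{[N]}_{[p]}\big)^\top\mathscr U_N$ (a $p\times N$ matrix with entries $A^{(i)}_n(x)$, row $i\in\{1,\dots,p\}$, column $n$). Let $\Lambda^{[N,N+q]}_{[q]}$ be the $N\times(N+q)$ matrix with entries $\delta_{j,i+q}$, and define the banded recursion matrix (with $q$ superdiagonals and $p$ subdiagonals) $\mathscr T_N=\mathscr L_N\Lambda^{[N,N+q]}_{[q]}\mathscr M^{[N+q,N]}\mathscr U_N$. For $r\in\mathbb N$ let $\mathfrak X_{[r,1]}(x)$ be the $r\times r$ matrix whose first $r-1$ rows are $\begin{bmatrix}0_{(r-1)\times1} & I_{r-1}\end{bmatrix}$ and whose last row is $\begin{bmatrix}x&0&\cdots&0\end{bmatrix}$. Define Christoffel-perturbed measures $\mathrm d\mu_{(n,m)}=\mathfrak X_{[q,1]}^n\,\mathrm d\mu\,\big(\mathfrak X_{[p,1]}^m\big)^\top$, their moment matrices $\mathscr M_{N,(n,m)}=\int X^{[N]}_{[q]}\,\mathrm d\mu_{(n,m)}\,(X^{[N]}_{[p]})^\top$, and assume each $\mathscr M_{N,(b,0)}$, $b\in\{1,\dots,q\}$, and $\mathscr M_{N,(0,a)}$, $a\in\{1,\dots,p\}$, admits a Gauss--Borel factorization $\mathscr M_{N,(n,m)}=\mathscr L_{N,(n,m)}^{-1}\mathscr U_{N,(n,m)}^{-1}$ (lower unitriangular / upper triangular). Then $\mathscr T_N=L_1\cdots L_pU_q\cdots U_1$ with $U_b=\mathscr U_{N,(b,0)}^{-1}\mathscr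 U_{N,(b-1,0)}$ upper bidiagonal with diagonal entries $U_{b,0},\dots,U_{b,N-1}$ and all superdiagonal entries equal to $1$, and $L_a=\mathscr L_{N,(0,a-1)}\mathscr L_{N,(0,a)}^{-1}$ lower bidiagonal with unit diagonal and subdiagonal entries $L_{a,1},\dots,L_{a,N-1}$. The $\tau$-determinants are \[ \tau^B_{b,n}=\det\begin{bmatrix}B^{(1)}_n(0)&\cdots&B^{(b)}_n(0)\\ \vdots&&\vdots\\ B^{(1)}_{n+b-1}(0)&\cdots&B^{(b)}_{n+b-1}(0)\end{bmatrix},\qquad \tau^A_{a,n}=\det\begin{bmatrix}A^{(1)}_{n+a-1}(0)&\cdots&A^{(1)}_n(0)\\ \vdots&&\vdots\\ A^{(a)}_{n+a-1}(0)&\cdots&A^{(a)}_n(0)\end{bmatrix}, \] with $\tau^A_{0,n}=\tau^B_{0,n}=1$; their nonvanishing is equivalent to the existence of the transformed orthogonality for $\mathrm d\mu_{(b,0)}$ and $\mathrm d\mu_{(0,a)}$. *)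

theory Defs
  imports "HOL-Analysis.Analysis" "Jordan_Normal_Form.Determinant"
begin

text \<open>Matrices are Jordan_Normal_Form matrices (type real mat) with explicit dimensions;
  all indices are 0-based.  The q x p matrix of (real, signed) measures mu on the reals is
  given through its Jordan decomposition: entry (i,j) is mup i j - mum i j, where mup i j
  and mum i j are Borel measures on the reals with finite moments of all orders.\<close>

definition signed_measure_matrix ::
  "nat \<Rightarrow> nat \<Rightarrow> (nat \<Rightarrow> nat \<Rightarrow> real measure) \<Rightarrow> (nat \<Rightarrow> nat \<Rightarrow> real measure) \<Rightarrow> bool" where
  "signed_measure_matrix q p mup mum \<longleftrightarrow>
     (\<forall>i<q. \<forall>j<p. sets (mup i j) = sets borel \<and> sets (mum i j) = sets borel \<and>
        (\<forall>k::nat. integrable (mup i j) (\<lambda>x. x ^ k) \<and> integrable (mum i j) (\<lambda>x. x ^ k)))"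

definition mint ::
  "(nat \<Rightarrow> nat \<Rightarrow> real measure) \<Rightarrow> (nat \<Rightarrow> nat \<Rightarrow> real measure) \<Rightarrow> nat \<Rightarrow> nat \<Rightarrow> (real \<Rightarrow> real) \<Rightarrow> real" where
  "mint mup mum i j f = integral\<^sup>L (mup i j) f - integral\<^sup>L (mum i j) f"

text \<open>X^{[M]}_{[r]}(x): the M x r matrix whose row i is x^(i div r) e_{(i mod r)+1}^T.\<close>
definition Xmon :: "nat \<Rightarrow> nat \<Rightarrow> real \<Rightarrow> real mat" where
  "Xmon r M x = mat M r (\<lambda>(i,j). if j = i mod r then x ^ (i div r) else 0)"

text \<open>The r x r matrix fraktur-X_{[r,1]}(x): first r-1 rows [0 | I_{r-1}], last row [x 0 ... 0].\<close>
definition Xfr :: "nat \<Rightarrow> real \<Rightarrow> real mat" where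
  "Xfr r x = mat r r (\<lambda>(i,j). if i + 1 < r then (if j = i + 1 then 1 else 0)
                                             else (if j = 0 then x else 0))"

text \<open>Moment matrix of the Christoffel perturbed measure d mu_{(n,m)}, of size N x M:
  integral of X^{[N]}_{[q]} Xfr_q^n d mu (Xfr_p^m)^T (X^{[M]}_{[p]})^T.
  moment_mat q p mup mum N M 0 0 is the moment matrix M^{[N,M]}, and
  moment_mat q p mup mum N N n m is M_{N,(n,m)}.\<close>
definition moment_mat ::
  "nat \<Rightarrow> nat \<Rightarrow> (nat \<Rightarrow> nat \<Rightarrow> real measure) \<Rightarrow> (nat \<Rightarrow> nat \<Rightarrow> real measure)
    \<Rightarrow> nat \<Rightarrow> nat \<Rightarrow> nat \<Rightarrow> nat \<Rightarrow> real mat" where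
  "moment_mat q p mup mum N M n m = mat N M (\<lambda>(r,s).
     \<Sum>k<q. \<Sum>l<p. mint mup mum k l
        (\<lambda>x. (Xmon q N x * (Xfr q x ^\<^sub>m n)) $$ (r,k) * (Xmon p M x * (Xfr p x ^\<^sub>m m)) $$ (s,l)))"

definition minv :: "real mat \<Rightarrow> real mat" where
  "minv A = (THE B. B \<in> carrier_mat (dim_row A) (dim_row A) \<and>
                    A * B = 1\<^sub>m (dim_row A) \<and> B * A = 1\<^sub>m (dim_row A))"

definition lower_unitriangular :: "real mat \<Rightarrow> bool" where
  "lower_unitriangular L \<longleftrightarrow>
     (\<forall>i<dim_row L. L $$ (i,i) = 1 \<and> (\<forall>j. i < j \<and> j < dim_col L \<longrightarrow> L $$ (i,j) = 0))"

definition gauss_borel :: "nat \<Rightarrow> real mat \<Rightarrow> real mat \<Rightarrow> real mat \<Rightarrow> bool" where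
  "gauss_borel N M L U \<longleftrightarrow>
     L \<in> carrier_mat N N \<and> U \<in> carrier_mat N N \<and> lower_unitriangular L \<and>
     upper_triangular U \<and> invertible_mat U \<and> M = minv L * minv U"

text \<open>B^{[N]}(x) = L_N X^{[N]}_{[q]}(x) (N x q, entry (n,j-1) is B^{(j)}_n(x)) and
  A^{[N]}(x) = (X^{[N]}_{[p]}(x))^T U_N (p x N, entry (i-1,n) is A^{(i)}_n(x)).\<close>
definition Bmat :: "nat \<Rightarrow> nat \<Rightarrow> real mat \<Rightarrow> real \<Rightarrow> real mat" where
  "Bmat q N L x = L * Xmon q N x"

definition Amat :: "nat \<Rightarrow> nat \<Rightarrow> real mat \<Rightarrow> real \<Rightarrow> real mat" where
  "Amat p N U x = transpose_mat (Xmon p N x) * U"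

text \<open>tau determinants (the 0 x 0 determinant is 1).\<close>
definition tauB :: "nat \<Rightarrow> nat \<Rightarrow> real mat \<Rightarrow> nat \<Rightarrow> nat \<Rightarrow> real" where
  "tauB q N L b n = det (mat b b (\<lambda>(i,j). Bmat q N L 0 $$ (n + i, j)))"

definition tauA :: "nat \<Rightarrow> nat \<Rightarrow> real mat \<Rightarrow> nat \<Rightarrow> nat \<Rightarrow> real" where
  "tauA p N U a n = det (mat a a (\<lambda>(i,j). Amat p N U 0 $$ (i, n + a - 1 - j)))"

end

theory Submission
  imports Defs
begin

lemma mult_entry:
  fixes A B :: "real mat"
  assumes "A \<in> carrier_mat n m" "B \<in> carrier_mat m k" "i < n" "j < k"
  shows "(A * B) $$ (i,j) = (\<Sum>t<m. A $$ (i,t) * B $$ (t,j))"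
  using assms by (auto simp: scalar_prod_def lessThan_atLeast0 intro!: sum.cong)

lemma sum_single:
  fixes f :: "nat \<Rightarrow> real"
  assumes "t0 < m" "\<And>t. t < m \<Longrightarrow> t \<noteq> t0 \<Longrightarrow> f t = 0"
  shows "(\<Sum>t<m. f t) = f t0"
proof -
  have "(\<Sum>t<m. f t) = f t0 + (\<Sum>t\<in>{..<m} - {t0}. f t)"
    using assms(1) by (simp add: sum.remove)
  also have "(\<Sum>t\<in>{..<m} - {t0}. f t) = 0" using assms(2) by (intro sum.neutral) auto
  finally show ?thesis by simp
qed

lemma minv_props:
  fixes A :: "real mat"
  assumes inv: "invertible_mat A" and A: "A \<in> carrier_mat n n"
  shows "minv A \<in> carrier_mat n n" "A * minv A = 1\<^sub>m n" "minv A * A = 1\<^sub>m n"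
proof -
  from inv obtain B where AB: "A * B = 1\<^sub>m (dim_row A)" and BA: "B * A = 1\<^sub>m (dim_row B)"
    unfolding invertible_mat_def inverts_mat_def by auto
  have "dim_col B = n" using arg_cong[OF AB, of dim_col] A by auto
  moreover have "dim_row B = n" using arg_cong[OF BA, of dim_col] A by auto
  ultimately have B: "B \<in> carrier_mat n n" by auto
  have dr: "dim_row A = n" using A by auto
  have P: "B \<in> carrier_mat (dim_row A) (dim_row A) \<and> A * B = 1\<^sub>m (dim_row A) \<and> B * A = 1\<^sub>m (dim_row A)"
    using B AB BA dr by auto
  have U: "X = B" if "X \<in> carrier_mat (dim_row A) (dim_row A) \<and> A * X = 1\<^sub>m (dim_row A) \<and> X * A = 1\<^sub>m (dim_row A)" for X
  proof -
    have X: "X \<in> carrier_mat n n" using that dr by auto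
    have "X = X * (A * B)" using AB dr X by simp
    also have "\<dots> = (X * A) * B" using X A B by simp
    also have "\<dots> = B" using that dr B by simp
    finally show ?thesis .
  qed
  have "minv A = B" unfolding minv_def using P U by (rule the_equality)
  then show "minv A \<in> carrier_mat n n" "A * minv A = 1\<^sub>m n" "minv A * A = 1\<^sub>m n"
    using B AB BA dr by auto
qed

lemma det_nonzero_invertible:
  fixes A :: "real mat"
  assumes A: "A \<in> carrier_mat n n" and d: "det A \<noteq> 0"
  shows "invertible_mat A"
proof -
  from det_non_zero_imp_unit[OF A d, of undefined]
  obtain B where B: "B \<in> carrier_mat n n" "B * A = 1\<^sub>m n" "A * B = 1\<^sub>m n"
    unfolding Units_def ring_mat_def by auto
  then show ?thesis using A unfolding invertible_mat_def inverts_mat_def square_mat.simps by auto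
qed


lemma upper_inv:
  fixes U V :: "real mat"
  assumes U: "U \<in> carrier_mat n n" and V: "V \<in> carrier_mat n n" and VU: "V * U = 1\<^sub>m n"
    and ut: "\<And>i j. j < i \<Longrightarrow> i < n \<Longrightarrow> U $$ (i,j) = 0"
    and nz: "\<And>i. i < n \<Longrightarrow> U $$ (i,i) \<noteq> 0"
  shows "\<And>i j. j < i \<Longrightarrow> i < n \<Longrightarrow> V $$ (i,j) = 0"
    and "\<And>i. i < n \<Longrightarrow> V $$ (i,i) * U $$ (i,i) = 1"
proof -
  have low: "\<forall>j. j < i \<longrightarrow> V $$ (i,j) = 0" if i: "i < n" for i
  proof -
    have "j < i \<longrightarrow> V $$ (i,j) = 0" for j
    proof (induction j rule: less_induct)
      case (less j)
      show ?case
      proof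
        assume ji: "j < i"
        have "0 = (V * U) $$ (i,j)" using VU ji i by simp
        also have "\<dots> = (\<Sum>t<n. V $$ (i,t) * U $$ (t,j))" using mult_entry[OF V U i] ji i by simp
        also have "\<dots> = V $$ (i,j) * U $$ (j,j)"
        proof (rule sum_single)
          show "j < n" using ji i by simp
          fix t assume "t < n" "t \<noteq> j"
          then show "V $$ (i, t) * U $$ (t, j) = 0"
            using less.IH[of t] ut[of j t] ji by (cases "t < j") auto
        qed
        finally show "V $$ (i,j) = 0" using nz[of j] ji i by simp
      qed
    qed
    then show ?thesis by auto
  qed
  then show "\<And>i j. j < i \<Longrightarrow> i < n \<Longrightarrow> V $$ (i,j) = 0" by auto
  fix i assume i: "i < n"
  have "1 = (V * U) $$ (i,i)" using VU i by simp
  also have "\<dots> = (\<Sum>t<n. V $$ (i,t) * U $$ (t,i))" using mult_entry[OF V U i i] by simp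
  also have "\<dots> = V $$ (i,i) * U $$ (i,i)"
  proof (rule sum_single)
    show "i < n" using i .
    fix t assume "t < n" "t \<noteq> i"
    then show "V $$ (i, t) * U $$ (t, i) = 0"
      using low[OF i] ut[of i t] by (cases "t < i") auto
  qed
  finally show "V $$ (i,i) * U $$ (i,i) = 1" by simp
qed

definition lead :: "nat \<Rightarrow> real mat \<Rightarrow> real mat" where
  "lead k A = mat k k (\<lambda>(i,j). A $$ (i,j))"

lemma lead_carrier[simp]: "lead k A \<in> carrier_mat k k"
  unfolding lead_def by simp

lemma lead_mult_lower:
  fixes L M :: "real mat"
  assumes L: "L \<in> carrier_mat N N" and M: "M \<in> carrier_mat N N" and k: "k \<le> N"
    and lo: "\<And>i j. i < j \<Longrightarrow> j < N \<Longrightarrow> L $$ (i,j) = 0"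
  shows "lead k (L * M) = lead k L * lead k M"
proof (rule eq_matI)
  fix i j assume "i < dim_row (lead k L * lead k M)" "j < dim_col (lead k L * lead k M)"
  then have i: "i < k" and j: "j < k" by (auto simp: lead_def)
  have "lead k (L * M) $$ (i,j) = (\<Sum>t<N. L $$ (i,t) * M $$ (t,j))"
    using mult_entry[OF L M, of i j] i j k by (simp add: lead_def)
  also have "\<dots> = (\<Sum>t<k. L $$ (i,t) * M $$ (t,j))"
  proof (rule sum.mono_neutral_right)
    show "\<forall>t\<in>{..<N} - {..<k}. L $$ (i, t) * M $$ (t, j) = 0" using lo i by auto
  qed (use k in auto)
  also have "\<dots> = (lead k L * lead k M) $$ (i,j)"
    using mult_entry[OF lead_carrier lead_carrier, of i k j] i j k by (simp add: lead_def)
  finally show "lead k (L * M) $$ (i,j) = (lead k L * lead k M) $$ (i,j)" .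
qed (auto simp: lead_def)

lemma lead_mult_upper:
  fixes U M :: "real mat"
  assumes U: "U \<in> carrier_mat N N" and M: "M \<in> carrier_mat N N" and k: "k \<le> N"
    and up: "\<And>i j. j < i \<Longrightarrow> i < N \<Longrightarrow> U $$ (i,j) = 0"
  shows "lead k (M * U) = lead k M * lead k U"
proof (rule eq_matI)
  fix i j assume "i < dim_row (lead k M * lead k U)" "j < dim_col (lead k M * lead k U)"
  then have i: "i < k" and j: "j < k" by (auto simp: lead_def)
  have "lead k (M * U) $$ (i,j) = (\<Sum>t<N. M $$ (i,t) * U $$ (t,j))"
    using mult_entry[OF M U, of i j] i j k by (simp add: lead_def)
  also have "\<dots> = (\<Sum>t<k. M $$ (i,t) * U $$ (t,j))"
  proof (rule sum.mono_neutral_right)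
    show "\<forall>t\<in>{..<N} - {..<k}. M $$ (i, t) * U $$ (t, j) = 0" using up j by auto
  qed (use k in auto)
  also have "\<dots> = (lead k M * lead k U) $$ (i,j)"
    using mult_entry[OF lead_carrier lead_carrier, of i k j] i j k by (simp add: lead_def)
  finally show "lead k (M * U) $$ (i,j) = (lead k M * lead k U) $$ (i,j)" .
qed (auto simp: lead_def)

lemma prod_list_diag: "A \<in> carrier_mat n n \<Longrightarrow> prod_list (diag_mat A) = (\<Prod>i<n. A $$ (i,i))"
  unfolding diag_mat_def by (simp add: prod.list_conv_set_nth lessThan_atLeast0)



lemma det_lead_lowerunit:
  fixes A :: "real mat"
  assumes lo: "\<And>i j. i < j \<Longrightarrow> j < N \<Longrightarrow> A $$ (i,j) = 0"
    and d: "\<And>i. i < N \<Longrightarrow> A $$ (i,i) = 1" and k: "k \<le> N"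
  shows "det (lead k A) = 1"
proof -
  have "det (lead k A) = prod_list (diag_mat (lead k A))"
    by (rule det_lower_triangular[OF _ lead_carrier]) (use lo k in \<open>auto simp: lead_def\<close>)
  also have "\<dots> = (\<Prod>i<k. lead k A $$ (i,i))" by (rule prod_list_diag[OF lead_carrier])
  also have "\<dots> = 1" using d k by (auto simp: lead_def intro!: prod.neutral)
  finally show ?thesis .
qed

lemma det_lead_upper:
  fixes A :: "real mat"
  assumes up: "\<And>i j. j < i \<Longrightarrow> i < N \<Longrightarrow> A $$ (i,j) = 0" and k: "k \<le> N"
  shows "det (lead k A) = (\<Prod>i<k. A $$ (i,i))"
proof -
  have "det (lead k A) = prod_list (diag_mat (lead k A))"
    by (rule det_upper_triangular[OF _ lead_carrier]) (use up k in \<open>auto simp: lead_def\<close>)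
  also have "\<dots> = (\<Prod>i<k. lead k A $$ (i,i))" by (rule prod_list_diag[OF lead_carrier])
  also have "\<dots> = (\<Prod>i<k. A $$ (i,i))" by (auto simp: lead_def intro!: prod.cong)
  finally show ?thesis .
qed

lemma GB_facts:
  fixes M L U :: "real mat"
  assumes gb: "gauss_borel N M L U" and M: "M \<in> carrier_mat N N"
  shows "L \<in> carrier_mat N N" "U \<in> carrier_mat N N"
    "\<And>i j. i < j \<Longrightarrow> j < N \<Longrightarrow> L $$ (i,j) = 0"
    "\<And>i. i < N \<Longrightarrow> L $$ (i,i) = 1"
    "\<And>i j. j < i \<Longrightarrow> i < N \<Longrightarrow> U $$ (i,j) = 0"
    "\<And>i. i < N \<Longrightarrow> U $$ (i,i) \<noteq> 0"
    "L * M = minv U" "M * U = minv L"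
    "minv U \<in> carrier_mat N N"
    "\<And>i j. j < i \<Longrightarrow> i < N \<Longrightarrow> minv U $$ (i,j) = 0"
    "\<And>i. i < N \<Longrightarrow> minv U $$ (i,i) * U $$ (i,i) = 1"
    "minv L \<in> carrier_mat N N"
    "\<And>i j. i < j \<Longrightarrow> j < N \<Longrightarrow> minv L $$ (i,j) = 0"
    "\<And>i. i < N \<Longrightarrow> minv L $$ (i,i) = 1"
    "\<And>k. k \<le> N \<Longrightarrow> det (lead k M) * (\<Prod>i<k. U $$ (i,i)) = 1"
proof -
  have L: "L \<in> carrier_mat N N" and U: "U \<in> carrier_mat N N" and lu: "lower_unitriangular L"
    and ut: "upper_triangular U" and iU: "invertible_mat U" and Meq: "M = minv L * minv U"
    using gb unfolding gauss_borel_def by auto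
  have Llo: "\<And>i j. i < j \<Longrightarrow> j < N \<Longrightarrow> L $$ (i,j) = 0"
    and Ld: "\<And>i. i < N \<Longrightarrow> L $$ (i,i) = 1"
    using lu L unfolding lower_unitriangular_def by auto
  have Uup: "\<And>i j. j < i \<Longrightarrow> i < N \<Longrightarrow> U $$ (i,j) = 0" using ut U by auto
  have "det L = prod_list (diag_mat L)" by (rule det_lower_triangular[OF _ L]) (rule Llo)
  also have "\<dots> = (\<Prod>i<N. L $$ (i,i))" by (rule prod_list_diag[OF L])
  also have "\<dots> = 1" using Ld by simp
  finally have dL: "det L = 1" .
  have iL: "invertible_mat L" by (rule det_nonzero_invertible[OF L]) (simp add: dL)
  note mL = minv_props[OF iL L] and mU = minv_props[OF iU U]
  have LM: "L * M = minv U"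
  proof -
    have "L * M = (L * minv L) * minv U" unfolding Meq using L mL(1) mU(1) by simp
    then show ?thesis using mL(2) mU(1) by simp
  qed
  have MU: "M * U = minv L"
  proof -
    have "M * U = minv L * (minv U * U)" unfolding Meq using U mL(1) mU(1) by simp
    then show ?thesis using mU(3) mL(1) by simp
  qed
  have "det U * det (minv U) = 1" using det_mult[OF U mU(1)] mU(2) by simp
  then have dU: "det U \<noteq> 0" by auto
  have "det U = prod_list (diag_mat U)" by (rule det_upper_triangular[OF ut U])
  also have "\<dots> = (\<Prod>i<N. U $$ (i,i))" by (rule prod_list_diag[OF U])
  finally have "(\<Prod>i<N. U $$ (i,i)) \<noteq> 0" using dU by simp
  then have Unz: "\<And>i. i < N \<Longrightarrow> U $$ (i,i) \<noteq> 0" by auto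
  note iUf = upper_inv[OF U mU(1) mU(3) Uup Unz]
  have tL: "transpose_mat (minv L) * transpose_mat L = 1\<^sub>m N"
    using arg_cong[OF mL(2), of transpose_mat] transpose_mult[OF L mL(1)] by simp
  have T1: "transpose_mat L \<in> carrier_mat N N" using L by simp
  have T2: "transpose_mat (minv L) \<in> carrier_mat N N" using mL(1) by simp
  have ut': "\<And>i j. j < i \<Longrightarrow> i < N \<Longrightarrow> transpose_mat L $$ (i,j) = 0" using L Llo by auto
  have nz': "\<And>i. i < N \<Longrightarrow> transpose_mat L $$ (i,i) \<noteq> 0" using L Ld by auto
  note iLf = upper_inv[OF T1 T2 tL ut' nz']
  have iLlo: "\<And>i j. i < j \<Longrightarrow> j < N \<Longrightarrow> minv L $$ (i,j) = 0"
  proof -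
    fix i j assume "i < j" "j < N"
    then have "transpose_mat (minv L) $$ (j,i) = 0" using iLf(1) by blast
    then show "minv L $$ (i,j) = 0" using mL(1) \<open>i < j\<close> \<open>j < N\<close> by auto
  qed
  have iLd: "\<And>i. i < N \<Longrightarrow> minv L $$ (i,i) = 1"
  proof -
    fix i assume "i < N"
    then show "minv L $$ (i,i) = 1" using iLf(2)[of i] mL(1) L Ld by auto
  qed
  have ld: "det (lead k M) * (\<Prod>i<k. U $$ (i,i)) = 1" if k: "k \<le> N" for k
  proof -
    have "lead k (L * M * U) = lead k (1\<^sub>m N)" using LM mU(3) by simp
    also have "\<dots> = 1\<^sub>m k" using k by (auto simp: lead_def)
    finally have e: "lead k (L * M * U) = 1\<^sub>m k" .
    have "lead k (L * M * U) = lead k (L * M) * lead k U"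
      by (rule lead_mult_upper[OF U _ k Uup]) (use L M in auto)
    also have "\<dots> = lead k L * lead k M * lead k U"
      using lead_mult_lower[OF L M k Llo] by simp
    finally have e2: "lead k L * lead k M * lead k U = 1\<^sub>m k" using e by simp
    have d1: "det (lead k L) = 1"
    proof -
      have "det (lead k L) = prod_list (diag_mat (lead k L))"
        by (rule det_lower_triangular[OF _ lead_carrier]) (use Llo k in \<open>auto simp: lead_def\<close>)
      also have "\<dots> = (\<Prod>i<k. lead k L $$ (i,i))" by (rule prod_list_diag[OF lead_carrier])
      also have "\<dots> = 1" using Ld k by (auto simp: lead_def intro!: prod.neutral)
      finally show ?thesis .
    qed
    have d2: "det (lead k U) = (\<Prod>i<k. U $$ (i,i))"
    proof -
      have "det (lead k U) = prod_list (diag_mat (lead k U))"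
        by (rule det_upper_triangular[OF _ lead_carrier]) (use Uup k in \<open>auto simp: lead_def\<close>)
      also have "\<dots> = (\<Prod>i<k. lead k U $$ (i,i))" by (rule prod_list_diag[OF lead_carrier])
      also have "\<dots> = (\<Prod>i<k. U $$ (i,i))" by (auto simp: lead_def intro!: prod.cong)
      finally show ?thesis .
    qed
    have "det (lead k L * lead k M * lead k U) = det (lead k L) * det (lead k M) * det (lead k U)"
      using det_mult[OF mult_carrier_mat[OF lead_carrier lead_carrier] lead_carrier, of k L M U]
        det_mult[OF lead_carrier lead_carrier, of k L M] by simp
    then show ?thesis using e2 d1 d2 by simp
  qed
  show "L \<in> carrier_mat N N" "U \<in> carrier_mat N N"
    "\<And>i j. i < j \<Longrightarrow> j < N \<Longrightarrow> L $$ (i,j) = 0"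
    "\<And>i. i < N \<Longrightarrow> L $$ (i,i) = 1"
    "\<And>i j. j < i \<Longrightarrow> i < N \<Longrightarrow> U $$ (i,j) = 0"
    "\<And>i. i < N \<Longrightarrow> U $$ (i,i) \<noteq> 0"
    "L * M = minv U" "M * U = minv L"
    "minv U \<in> carrier_mat N N"
    "\<And>i j. j < i \<Longrightarrow> i < N \<Longrightarrow> minv U $$ (i,j) = 0"
    "\<And>i. i < N \<Longrightarrow> minv U $$ (i,i) * U $$ (i,i) = 1"
    "minv L \<in> carrier_mat N N"
    "\<And>i j. i < j \<Longrightarrow> j < N \<Longrightarrow> minv L $$ (i,j) = 0"
    "\<And>i. i < N \<Longrightarrow> minv L $$ (i,i) = 1"
    "\<And>k. k \<le> N \<Longrightarrow> det (lead k M) * (\<Prod>i<k. U $$ (i,i)) = 1"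
    using L U Llo Ld Uup Unz LM MU mU(1) iUf mL(1) iLlo iLd ld by auto
qed


lemma lead_mat: "k \<le> N \<Longrightarrow> lead k (mat N N f) = mat k k f"
  unfolding lead_def by (rule eq_matI) auto

lemma tauB_rel:
  fixes g :: "nat \<Rightarrow> nat \<Rightarrow> real" and L U :: "real mat"
  assumes gb: "gauss_borel N (mat N N (\<lambda>(i,j). g i j)) L U" and nb: "n + b \<le> N"
  shows "det (mat n n (\<lambda>(i,j). g i j)) * det (mat b b (\<lambda>(i,j). L $$ (n+i, j)))
         = (-1)^(n*b) * det (mat n n (\<lambda>(i,j). g (i+b) j))"
proof -
  let ?M = "mat N N (\<lambda>(i,j). g i j)"
  have M: "?M \<in> carrier_mat N N" by simp
  note F = GB_facts[OF gb M]
  define K where "K = n + b"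
  have K: "K \<le> N" using nb K_def by simp
  define C where "C = mat K K (\<lambda>(i,j). if j < n then g i j else (if i = j - n then 1 else 0))"
  define W where "W = L * ?M"
  have C: "C \<in> carrier_mat K K" unfolding C_def by simp
  have W: "W = minv U" unfolding W_def using F(7) .
  have PC: "lead K L * C = four_block_mat (lead n W) (mat n b (\<lambda>(i,j). L $$ (i,j))) (0\<^sub>m b n)
      (mat b b (\<lambda>(i,j). L $$ (n+i, j)))" (is "_ = ?FB")
  proof (rule eq_matI)
    fix i j assume "i < dim_row ?FB" "j < dim_col ?FB"
    then have i: "i < K" and j: "j < K" by (auto simp: K_def lead_def)
    have e: "(lead K L * C) $$ (i,j) = (\<Sum>t<K. L $$ (i,t) * C $$ (t,j))"
      using mult_entry[OF lead_carrier C i j] i j by (simp add: lead_def)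
    show "(lead K L * C) $$ (i,j) = ?FB $$ (i,j)"
    proof (cases "j < n")
      case True
      have "(\<Sum>t<K. L $$ (i,t) * C $$ (t,j)) = (\<Sum>t<K. L $$ (i,t) * g t j)"
        using True j by (auto simp: C_def intro!: sum.cong)
      also have "\<dots> = (\<Sum>t<N. L $$ (i,t) * g t j)"
      proof (rule sum.mono_neutral_left)
        show "\<forall>t\<in>{..<N} - {..<K}. L $$ (i, t) * g t j = 0" using F(3) i by auto
      qed (use K in auto)
      also have "\<dots> = W $$ (i,j)"
        unfolding W_def using mult_entry[OF F(1) M, of i j] i j K by simp
      finally have eW: "(lead K L * C) $$ (i,j) = W $$ (i,j)" using e by simp
      show ?thesis
      proof (cases "i < n")
        case True
        then show ?thesis using eW \<open>j < n\<close> by (simp add: lead_def)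
      next
        case False
        then have "W $$ (i,j) = 0" using W F(10) \<open>j < n\<close> i K by auto
        then show ?thesis using eW False \<open>j < n\<close> i by (simp add: lead_def K_def)
      qed
    next
      case False
      have "(\<Sum>t<K. L $$ (i,t) * C $$ (t,j)) = L $$ (i, j - n) * C $$ (j - n, j)"
        by (rule sum_single) (use False j i in \<open>auto simp: C_def\<close>)
      also have "\<dots> = L $$ (i, j - n)" using False j by (simp add: C_def K_def)
      finally show ?thesis using e False i j by (auto simp: lead_def K_def)
    qed
  qed (auto simp: lead_def K_def C_def)
  have "det (lead K L * C) = det C"
    using det_mult[OF lead_carrier C] det_lead_lowerunit[OF F(3) F(4) K] by simp
  also have "det C = (-1)^(b*n) * det (mat (b+n) (b+n) (\<lambda>(i,j). C $$ (i, if j < b then j + n else j - b)))"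
    by (rule det_swap_cols) (use C K_def in \<open>simp add: add.commute\<close>)
  also have "mat (b+n) (b+n) (\<lambda>(i,j). C $$ (i, if j < b then j + n else j - b))
     = four_block_mat (1\<^sub>m b) (mat b n (\<lambda>(i,j). g i j)) (0\<^sub>m n b) (mat n n (\<lambda>(i,j). g (i+b) j))"
    by (rule eq_matI) (auto simp: C_def K_def)
  also have "det \<dots> = det (1\<^sub>m b) * det (mat n n (\<lambda>(i,j). g (i+b) j))"
    by (rule det_four_block_mat_lower_left_zero) auto
  finally have d1: "det (lead K L * C) = (-1)^(b*n) * det (mat n n (\<lambda>(i,j). g (i+b) j))" by simp
  have lW: "lead n W = lead n L * lead n ?M"
    unfolding W_def by (rule lead_mult_lower[OF F(1) M _ F(3)]) (use K K_def in linarith)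
  have dW: "det (lead n W) = det (mat n n (\<lambda>(i,j). g i j))"
    unfolding lW using det_mult[OF lead_carrier lead_carrier, of n L ?M] det_lead_lowerunit[OF F(3) F(4), of n]
      lead_mat[of n N] K K_def by simp
  have "det ?FB = det (lead n W) * det (mat b b (\<lambda>(i,j). L $$ (n+i, j)))"
    by (rule det_four_block_mat_lower_left_zero) auto
  then show ?thesis using d1 PC dW by (simp add: mult.commute)
qed

lemma tauA_rel:
  fixes g :: "nat \<Rightarrow> nat \<Rightarrow> real" and L U :: "real mat"
  assumes gb: "gauss_borel N (mat N N (\<lambda>(i,j). g i j)) L U" and na: "n + a \<le> N"
  shows "det (mat a a (\<lambda>(i,j). U $$ (i, n+j)))
         = (-1)^(a*n) * det (mat n n (\<lambda>(i,j). g i (j+a))) * (\<Prod>i<n+a. U $$ (i,i))"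
proof -
  let ?M = "mat N N (\<lambda>(i,j). g i j)"
  have M: "?M \<in> carrier_mat N N" by simp
  note F = GB_facts[OF gb M]
  define K where "K = n + a"
  have K: "K \<le> N" using na K_def by simp
  define R where "R = mat K K (\<lambda>(i,j). if i < n then g i j else (if j = i - n then 1 else 0))"
  define W where "W = ?M * U"
  have R: "R \<in> carrier_mat K K" unfolding R_def by simp
  have W: "W = minv L" unfolding W_def using F(8) .
  have RU: "R * lead K U = four_block_mat (lead n W) (0\<^sub>m n a) (mat a n (\<lambda>(i,j). U $$ (i,j)))
      (mat a a (\<lambda>(i,j). U $$ (i, n+j)))" (is "_ = ?FB")
  proof (rule eq_matI)
    fix i j assume "i < dim_row ?FB" "j < dim_col ?FB"
    then have i: "i < K" and j: "j < K" by (auto simp: K_def lead_def)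
    have e: "(R * lead K U) $$ (i,j) = (\<Sum>t<K. R $$ (i,t) * U $$ (t,j))"
      using mult_entry[OF R lead_carrier i j] i j by (simp add: lead_def)
    show "(R * lead K U) $$ (i,j) = ?FB $$ (i,j)"
    proof (cases "i < n")
      case True
      have "(\<Sum>t<K. R $$ (i,t) * U $$ (t,j)) = (\<Sum>t<K. g i t * U $$ (t,j))"
        using True i by (auto simp: R_def intro!: sum.cong)
      also have "\<dots> = (\<Sum>t<N. g i t * U $$ (t,j))"
      proof (rule sum.mono_neutral_left)
        show "\<forall>t\<in>{..<N} - {..<K}. g i t * U $$ (t,j) = 0" using F(5) j K by auto
      qed (use K in auto)
      also have "\<dots> = W $$ (i,j)"
        unfolding W_def using mult_entry[OF M F(2), of i j] i j K by simp
      finally have eW: "(R * lead K U) $$ (i,j) = W $$ (i,j)" using e by simp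
      show ?thesis
      proof (cases "j < n")
        case True
        then show ?thesis using eW \<open>i < n\<close> by (simp add: lead_def)
      next
        case False
        then have "W $$ (i,j) = 0" using W F(13) \<open>i < n\<close> j K by auto
        then show ?thesis using eW False \<open>i < n\<close> j by (simp add: lead_def K_def)
      qed
    next
      case False
      have "(\<Sum>t<K. R $$ (i,t) * U $$ (t,j)) = R $$ (i, i - n) * U $$ (i - n, j)"
        by (rule sum_single) (use False j i in \<open>auto simp: R_def\<close>)
      also have "\<dots> = U $$ (i - n, j)" using False i by (simp add: R_def K_def)
      finally show ?thesis using e False i j by (auto simp: lead_def K_def)
    qed
  qed (auto simp: lead_def K_def R_def)
  have "det (R * lead K U) = det R * (\<Prod>i<K. U $$ (i,i))"
    using det_mult[OF R lead_carrier] det_lead_upper[OF F(5) K] by simp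
  also have "det R = (-1)^(a*n) * det (mat (a+n) (a+n) (\<lambda>(i,j). R $$ (if i < a then i + n else i - a, j)))"
    by (rule det_swap_rows) (use R K_def in \<open>simp add: add.commute\<close>)
  also have "mat (a+n) (a+n) (\<lambda>(i,j). R $$ (if i < a then i + n else i - a, j))
     = four_block_mat (1\<^sub>m a) (0\<^sub>m a n) (mat n a (\<lambda>(i,j). g i j)) (mat n n (\<lambda>(i,j). g i (j+a)))"
    by (rule eq_matI) (auto simp: R_def K_def)
  also have "det \<dots> = det (1\<^sub>m a) * det (mat n n (\<lambda>(i,j). g i (j+a)))"
    by (rule det_four_block_mat_upper_right_zero) auto
  finally have d1: "det (R * lead K U) = (-1)^(a*n) * det (mat n n (\<lambda>(i,j). g i (j+a))) * (\<Prod>i<K. U $$ (i,i))"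
    by simp
  have "det ?FB = det (lead n W) * det (mat a a (\<lambda>(i,j). U $$ (i, n+j)))"
    by (rule det_four_block_mat_upper_right_zero) auto
  also have "det (lead n W) = 1"
    unfolding W using det_lead_lowerunit[OF F(13) F(14), of n] K K_def by simp
  finally show ?thesis using d1 RU K_def by simp
qed


lemma Xshift:
  fixes x :: real
  assumes q: "q \<ge> 1" and r: "r < N"
  shows "k < q \<Longrightarrow> (Xmon q N x * Xfr q x ^\<^sub>m b) $$ (r,k) = (if k = (r+b) mod q then x^((r+b) div q) else 0)"
proof (induction b arbitrary: k)
  case 0
  have "Xfr q x ^\<^sub>m 0 = 1\<^sub>m q" by (simp add: Xfr_def)
  moreover have "Xmon q N x * 1\<^sub>m q = Xmon q N x" by (simp add: Xmon_def)
  ultimately show ?case using 0 r by (simp add: Xmon_def)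
next
  case (Suc b)
  have X: "Xmon q N x \<in> carrier_mat N q" by (simp add: Xmon_def)
  have F: "Xfr q x \<in> carrier_mat q q" by (simp add: Xfr_def)
  have P: "Xfr q x ^\<^sub>m b \<in> carrier_mat q q" using F by simp
  define c where "c = r + b"
  have "Xmon q N x * Xfr q x ^\<^sub>m Suc b = (Xmon q N x * Xfr q x ^\<^sub>m b) * Xfr q x"
    using assoc_mult_mat[OF X P F] by simp
  then have "(Xmon q N x * Xfr q x ^\<^sub>m Suc b) $$ (r,k)
      = (\<Sum>j<q. (Xmon q N x * Xfr q x ^\<^sub>m b) $$ (r,j) * Xfr q x $$ (j,k))"
    using mult_entry[OF mult_carrier_mat[OF X P] F r Suc.prems] by simp
  also have "\<dots> = (\<Sum>j<q. (if j = c mod q then x^(c div q) else 0) * Xfr q x $$ (j,k))"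
    using Suc.IH by (auto simp: c_def intro!: sum.cong)
  also have "\<dots> = (if c mod q = c mod q then x^(c div q) else 0) * Xfr q x $$ (c mod q,k)"
    by (rule sum_single) (use q in auto)
  also have "\<dots> = x^(c div q) * Xfr q x $$ (c mod q,k)" by simp
  also have "\<dots> = (if k = (r + Suc b) mod q then x^((r + Suc b) div q) else 0)"
  proof (cases "Suc (c mod q) = q")
    case True
    then have "Suc c mod q = 0" "Suc c div q = Suc (c div q)" by (simp_all add: mod_Suc div_Suc)
    then show ?thesis using True Suc.prems q by (auto simp: Xfr_def c_def)
  next
    case False
    then have "Suc c mod q = Suc (c mod q)" "Suc c div q = c div q" by (simp_all add: mod_Suc div_Suc)
    moreover have "Suc (c mod q) < q" using False mod_less_divisor[of q c] q by linarith
    ultimately show ?thesis using Suc.prems by (auto simp: Xfr_def c_def)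
  qed
  finally show ?case .
qed


definition Gm :: "nat \<Rightarrow> nat \<Rightarrow> (nat \<Rightarrow> nat \<Rightarrow> real measure) \<Rightarrow> (nat \<Rightarrow> nat \<Rightarrow> real measure) \<Rightarrow> nat \<Rightarrow> nat \<Rightarrow> real" where
  "Gm q p mup mum r s = (\<Sum>k<q. \<Sum>l<p. mint mup mum k l
     (\<lambda>x. (if k = r mod q then x^(r div q) else 0) * (if l = s mod p then x^(s div p) else 0)))"

lemma moment_entry:
  assumes q: "q \<ge> 1" and p: "p \<ge> 1"
  shows "moment_mat q p mup mum N N b a = mat N N (\<lambda>(r,s). Gm q p mup mum (r+b) (s+a))"
proof (rule eq_matI)
  fix r s assume "r < dim_row (mat N N (\<lambda>(r,s). Gm q p mup mum (r+b) (s+a)))"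
    "s < dim_col (mat N N (\<lambda>(r,s). Gm q p mup mum (r+b) (s+a)))"
  then have r: "r < N" and s: "s < N" by auto
  show "moment_mat q p mup mum N N b a $$ (r,s) = mat N N (\<lambda>(r,s). Gm q p mup mum (r+b) (s+a)) $$ (r,s)"
    unfolding moment_mat_def Gm_def using r s
    by (auto intro!: sum.cong arg_cong[where f = "mint mup mum _ _"] simp: Xshift[OF q r] Xshift[OF p s])
qed (auto simp: moment_mat_def)

lemma Bmat0:
  assumes L: "L \<in> carrier_mat N N" and r: "r < N" and j: "j < q" "j < N"
  shows "Bmat q N L 0 $$ (r,j) = L $$ (r,j)"
proof -
  have X: "Xmon q N 0 \<in> carrier_mat N q" by (simp add: Xmon_def)
  have "Bmat q N L 0 $$ (r,j) = (\<Sum>t<N. L $$ (r,t) * Xmon q N 0 $$ (t,j))"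
    unfolding Bmat_def by (rule mult_entry[OF L X r j(1)])
  also have "\<dots> = L $$ (r,j) * Xmon q N 0 $$ (j,j)"
  proof (rule sum_single)
    show "j < N" using j by simp
    fix t assume t: "t < N" "t \<noteq> j"
    have "Xmon q N 0 $$ (t,j) = 0"
    proof (cases "j = t mod q")
      case True
      then have "t div q \<noteq> 0" using t(2) True j(1) by (auto simp: div_eq_0_iff)
      then show ?thesis using True t j by (simp add: Xmon_def)
    qed (use t j in \<open>simp add: Xmon_def\<close>)
    then show "L $$ (r,t) * Xmon q N 0 $$ (t,j) = 0" by simp
  qed
  also have "\<dots> = L $$ (r,j)" using j by (simp add: Xmon_def)
  finally show ?thesis .
qed

lemma Amat0:
  assumes U: "U \<in> carrier_mat N N" and i: "i < p" "i < N" and c: "c < N"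
  shows "Amat p N U 0 $$ (i,c) = U $$ (i,c)"
proof -
  have X: "transpose_mat (Xmon p N 0) \<in> carrier_mat p N" by (simp add: Xmon_def)
  have "Amat p N U 0 $$ (i,c) = (\<Sum>t<N. transpose_mat (Xmon p N 0) $$ (i,t) * U $$ (t,c))"
    unfolding Amat_def by (rule mult_entry[OF X U i(1) c])
  also have "\<dots> = transpose_mat (Xmon p N 0) $$ (i,i) * U $$ (i,c)"
  proof (rule sum_single)
    show "i < N" using i by simp
    fix t assume t: "t < N" "t \<noteq> i"
    have "Xmon p N 0 $$ (t,i) = 0"
    proof (cases "i = t mod p")
      case True
      then have "t div p \<noteq> 0" using t(2) True i(1) by (auto simp: div_eq_0_iff)
      then show ?thesis using True t i by (simp add: Xmon_def)
    qed (use t i in \<open>simp add: Xmon_def\<close>)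
    then show "transpose_mat (Xmon p N 0) $$ (i,t) * U $$ (t,c) = 0" using t i by (simp add: Xmon_def)
  qed
  also have "\<dots> = U $$ (i,c)" using i by (simp add: Xmon_def)
  finally show ?thesis .
qed

lemma rev_det:
  "\<exists>\<rho>::real. \<rho> \<noteq> 0 \<and> (\<forall>A::real mat. A \<in> carrier_mat a a \<longrightarrow>
     det (mat a a (\<lambda>(i,j). A $$ (i, a - 1 - j))) = \<rho> * det A)"
proof -
  define \<pi> where "\<pi> = (\<lambda>i::nat. if i < a then a - 1 - i else i)"
  have inj: "inj_on \<pi> {0..<a}" unfolding \<pi>_def inj_on_def by auto
  have img: "\<pi> ` {0..<a} \<subseteq> {0..<a}" unfolding \<pi>_def by auto
  have "\<pi> ` {0..<a} = {0..<a}" by (rule endo_inj_surj[OF _ img inj]) simp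
  then have "bij_betw \<pi> {0..<a} {0..<a}" using inj unfolding bij_betw_def by simp
  then have perm: "\<pi> permutes {0..<a}" by (rule bij_imp_permutes) (simp add: \<pi>_def)
  have nz: "(signof \<pi> :: real) \<noteq> 0" by (simp add: sign_def)
  have "det (mat a a (\<lambda>(i,j). A $$ (i, a - 1 - j))) = signof \<pi> * det A" if A: "A \<in> carrier_mat a a" for A :: "real mat"
  proof -
    have "det (mat a a (\<lambda>(i,j). A $$ (i, a - 1 - j))) = det (transpose_mat (mat a a (\<lambda>(i,j). A $$ (i, a - 1 - j))))"
      by (rule det_transpose[symmetric, OF mat_carrier])
    also have "transpose_mat (mat a a (\<lambda>(i,j). A $$ (i, a - 1 - j))) = mat a a (\<lambda>(i,j). transpose_mat A $$ (\<pi> i, j))"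
      using A by (intro eq_matI) (auto simp: \<pi>_def)
    also have "det \<dots> = signof \<pi> * det (transpose_mat A)"
      by (rule det_permute_rows[OF _ perm]) (use A in simp)
    also have "det (transpose_mat A) = det A" by (rule det_transpose[OF A])
    finally show ?thesis .
  qed
  then show ?thesis using nz by blast
qed


lemma algB:
  fixes a0 a1 c0 c1 b0 b1 :: real and e1 e2 e3 e4 :: nat
  assumes nz: "a0 \<noteq> 0" "a1 \<noteq> 0" "c0 \<noteq> 0" "c1 \<noteq> 0" "b0 \<noteq> 0" "b1 \<noteq> 0"
    and e: "e1 + e2 = Suc (e3 + e4)"
  shows "(1 / (b1 / b0)) * (c1 / c0) =
    - (((-1)^e1 * a0 / c0) * ((-1)^e2 * a1 / b1)) / (((-1)^e3 * a1 / c1) * ((-1)^e4 * a0 / b0))"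
proof -
  have s: "(-1::real)^e1 * (-1)^e2 = - ((-1)^e3 * (-1)^e4)"
    by (simp add: power_add[symmetric] e)
  have s0: "(-1::real)^e3 * (-1)^e4 \<noteq> 0" by simp
  have "- (((-1)^e1 * a0 / c0) * ((-1)^e2 * a1 / b1)) / (((-1)^e3 * a1 / c1) * ((-1)^e4 * a0 / b0))
     = (- ((-1)^e1 * (-1)^e2)) * (a0 * a1 * c1 * b0) / (((-1)^e3 * (-1)^e4) * (a1 * a0 * c0 * b1))"
    using nz by (simp add: field_simps)
  also have "\<dots> = (c1 * b0) / (c0 * b1)" unfolding s using nz s0 by (simp add: field_simps)
  finally show ?thesis using nz by (simp add: field_simps)
qed

lemma algA:
  fixes z0 z1 a0 a1 c1 c2 r1 r2 :: real and e1 e2 e3 e4 :: nat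
  assumes nz: "z0 \<noteq> 0" "z1 \<noteq> 0" "a0 \<noteq> 0" "a1 \<noteq> 0" "c1 \<noteq> 0" "c2 \<noteq> 0" "r1 \<noteq> 0" "r2 \<noteq> 0"
    and e: "e3 + e4 = Suc (e1 + e2)"
  shows "(a1 / a0) * (1 / (c2 / c1)) =
    - ((r1 * ((-1)^e1 * z1 / c2)) * (r2 * ((-1)^e2 * z0 / a0))) / ((r1 * ((-1)^e3 * z0 / c1)) * (r2 * ((-1)^e4 * z1 / a1)))"
proof -
  have s: "(-1::real)^e3 * (-1)^e4 = - ((-1)^e1 * (-1)^e2)"
    by (simp add: power_add[symmetric] e)
  have s0: "(-1::real)^e1 * (-1)^e2 \<noteq> 0" by simp
  have "- ((r1 * ((-1)^e1 * z1 / c2)) * (r2 * ((-1)^e2 * z0 / a0))) / ((r1 * ((-1)^e3 * z0 / c1)) * (r2 * ((-1)^e4 * z1 / a1)))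
     = (- ((-1)^e1 * (-1)^e2)) * (r1 * r2 * z1 * z0 * c1 * a1) / (((-1)^e3 * (-1)^e4) * (r1 * r2 * z0 * z1 * c2 * a0))"
    using nz by (simp add: field_simps)
  also have "\<dots> = (c1 * a1) / (c2 * a0)" unfolding s using nz s0 by (simp add: field_simps)
  finally show ?thesis using nz by (simp add: field_simps)
qed


lemma diag_ratio:
  fixes G :: "nat \<Rightarrow> nat \<Rightarrow> real"
  assumes gb: "gauss_borel N (mat N N (\<lambda>(i,j). G i j)) L U"
  shows "\<And>k. k \<le> N \<Longrightarrow> det (mat k k (\<lambda>(i,j). G i j)) = 1 / (\<Prod>i<k. U $$ (i,i))"
    "\<And>k. k \<le> N \<Longrightarrow> (\<Prod>i<k. U $$ (i,i)) \<noteq> 0"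
    "\<And>n. n < N \<Longrightarrow> U $$ (n,n) = (\<Prod>i<n+1. U $$ (i,i)) / (\<Prod>i<n. U $$ (i,i))"
proof -
  note F = GB_facts[OF gb mat_carrier]
  have e: "det (mat k k (\<lambda>(i,j). G i j)) * (\<Prod>i<k. U $$ (i,i)) = 1" if "k \<le> N" for k
    using F(15)[OF that] lead_mat[OF that] by simp
  show nz: "\<And>k. k \<le> N \<Longrightarrow> (\<Prod>i<k. U $$ (i,i)) \<noteq> 0"
  proof
    fix k assume "k \<le> N" "(\<Prod>i<k. U $$ (i,i)) = 0"
    then show False using e[of k] by (metis mult_zero_right zero_neq_one)
  qed
  show "\<And>k. k \<le> N \<Longrightarrow> det (mat k k (\<lambda>(i,j). G i j)) = 1 / (\<Prod>i<k. U $$ (i,i))"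
    using e nz by (simp add: eq_divide_eq)
  fix n assume n: "n < N"
  have "(\<Prod>i<n+1. U $$ (i,i)) = (\<Prod>i<n. U $$ (i,i)) * U $$ (n,n)" by simp
  then show "U $$ (n,n) = (\<Prod>i<n+1. U $$ (i,i)) / (\<Prod>i<n. U $$ (i,i))"
    using nz[of n] n by simp
qed

lemma partB:
  fixes G :: "nat \<Rightarrow> nat \<Rightarrow> real" and tB :: "nat \<Rightarrow> nat \<Rightarrow> real"
  assumes gb0: "gauss_borel N (mat N N (\<lambda>(i,j). G i j)) L0 U0"
    and gbc: "gauss_borel N (mat N N (\<lambda>(i,j). G (i+c) j)) Lc' Uc'"
    and gbb: "gauss_borel N (mat N N (\<lambda>(i,j). G (i+Suc c) j)) Lb Ub"
    and n: "n + Suc c < N"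
    and tB: "\<And>bb m. bb \<le> Suc c \<Longrightarrow> m + bb \<le> N \<Longrightarrow> tB bb m = det (mat bb bb (\<lambda>(i,j). L0 $$ (m+i,j)))"
  shows "(minv Ub * Uc') $$ (n,n) = - (tB c n * tB (Suc c) (n+1)) / (tB c (n+1) * tB (Suc c) n)"
proof -
  define P0 where "P0 k = (\<Prod>i<k. U0 $$ (i,i))" for k
  define Pc where "Pc k = (\<Prod>i<k. Uc' $$ (i,i))" for k
  define Pb where "Pb k = (\<Prod>i<k. Ub $$ (i,i))" for k
  note D0 = diag_ratio[OF gb0, folded P0_def]
  note Dc = diag_ratio[OF gbc, folded Pc_def]
  note Db = diag_ratio[OF gbb, folded Pb_def]
  note Fb = GB_facts[OF gbb mat_carrier]
  note Fc = GB_facts[OF gbc mat_carrier]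
  have rel: "tB bb m = (-1)^(m*bb) * P0 m / Pbb m"
    if bb: "bb \<le> Suc c" and m: "m + bb \<le> N"
      and dbb: "det (mat m m (\<lambda>(i,j). G (i+bb) j)) = 1 / Pbb m" and nzb: "Pbb m \<noteq> 0" for bb m Pbb
  proof -
    have "det (mat m m (\<lambda>(i,j). G i j)) * tB bb m = (-1)^(m*bb) * det (mat m m (\<lambda>(i,j). G (i+bb) j))"
      using tauB_rel[OF gb0 m] tB[OF bb m] by simp
    then have "(1 / P0 m) * tB bb m = (-1)^(m*bb) * (1 / Pbb m)" using D0(1)[of m] dbb m by simp
    then show ?thesis using D0(2)[of m] m nzb by (simp add: field_simps)
  qed
  have t1: "tB c n = (-1)^(n*c) * P0 n / Pc n"
    by (rule rel[of c n Pc]) (use n Dc in auto)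
  have t2: "tB (Suc c) (n+1) = (-1)^((n+1)*Suc c) * P0 (n+1) / Pb (n+1)"
    by (rule rel[of "Suc c" "n+1" Pb]) (use n Db in auto)
  have t3: "tB c (n+1) = (-1)^((n+1)*c) * P0 (n+1) / Pc (n+1)"
    by (rule rel[of c "n+1" Pc]) (use n Dc in auto)
  have t4: "tB (Suc c) n = (-1)^(n*Suc c) * P0 n / Pb n"
    by (rule rel[of "Suc c" n Pb]) (use n Db in auto)
  have nN: "n < N" using n by simp
  have "(minv Ub * Uc') $$ (n,n) = (\<Sum>t<N. minv Ub $$ (n,t) * Uc' $$ (t,n))"
    by (rule mult_entry[OF Fb(9) Fc(2) nN nN])
  also have "\<dots> = minv Ub $$ (n,n) * Uc' $$ (n,n)"
  proof (rule sum_single[OF nN])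
    fix t assume "t < N" "t \<noteq> n"
    then show "minv Ub $$ (n,t) * Uc' $$ (t,n) = 0" using Fb(10)[of t n] Fc(5)[of n t] nN
      by (cases "t < n") auto
  qed
  also have "minv Ub $$ (n,n) = 1 / Ub $$ (n,n)" using Fb(11)[OF nN] Fb(6)[OF nN] by (simp add: eq_divide_eq)
  also have "Ub $$ (n,n) = Pb (n+1) / Pb n" using Db(3)[OF nN] .
  also have "Uc' $$ (n,n) = Pc (n+1) / Pc n" using Dc(3)[OF nN] .
  also have "(1 / (Pb (n+1) / Pb n)) * (Pc (n+1) / Pc n) = - (tB c n * tB (Suc c) (n+1)) / (tB c (n+1) * tB (Suc c) n)"
    unfolding t1 t2 t3 t4
    by (rule algB) (use D0(2) Dc(2) Db(2) n in auto)
  finally show ?thesis .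
qed


lemma partA:
  fixes G :: "nat \<Rightarrow> nat \<Rightarrow> real" and tA :: "nat \<Rightarrow> nat \<Rightarrow> real" and \<rho> :: "nat \<Rightarrow> real"
  assumes gb0: "gauss_borel N (mat N N (\<lambda>(i,j). G i j)) L0 U0"
    and gbc: "gauss_borel N (mat N N (\<lambda>(i,j). G i (j+c))) Lc' Uc'"
    and gba: "gauss_borel N (mat N N (\<lambda>(i,j). G i (j+Suc c))) La Ua"
    and n: "n + Suc c < N"
    and tA: "\<And>aa m. aa \<le> Suc c \<Longrightarrow> m + aa \<le> N \<Longrightarrow> tA aa m = \<rho> aa * det (mat aa aa (\<lambda>(i,j). U0 $$ (i, m+j)))"
    and \<rho>: "\<And>aa. \<rho> aa \<noteq> 0"
  shows "(Lc' * minv La) $$ (n+1,n) = - (tA c (n+2) * tA (Suc c) n) / (tA c (n+1) * tA (Suc c) (n+1))"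
proof -
  define P0 where "P0 k = (\<Prod>i<k. U0 $$ (i,i))" for k
  define Pc where "Pc k = (\<Prod>i<k. Uc' $$ (i,i))" for k
  define Pa where "Pa k = (\<Prod>i<k. Ua $$ (i,i))" for k
  note D0 = diag_ratio[OF gb0, folded P0_def]
  note Dc = diag_ratio[OF gbc, folded Pc_def]
  note Da = diag_ratio[OF gba, folded Pa_def]
  let ?Ma = "mat N N (\<lambda>(i,j). G i (j+Suc c))"
  let ?Mc = "mat N N (\<lambda>(i,j). G i (j+c))"
  note Fa = GB_facts[OF gba mat_carrier]
  note Fc = GB_facts[OF gbc mat_carrier]
  have rel: "tA aa m = \<rho> aa * ((-1)^(aa*m) * P0 (m+aa) / Paa m)"
    if aa: "aa \<le> Suc c" and m: "m + aa \<le> N"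
      and daa: "det (mat m m (\<lambda>(i,j). G i (j+aa))) = 1 / Paa m" and nzb: "Paa m \<noteq> 0" for aa m Paa
  proof -
    have "tA aa m = \<rho> aa * ((-1)^(aa*m) * det (mat m m (\<lambda>(i,j). G i (j+aa))) * P0 (m+aa))"
      using tauA_rel[OF gb0 m] tA[OF aa m] by (simp add: P0_def)
    then show ?thesis using daa nzb by simp
  qed
  have t1: "tA c (n+2) = \<rho> c * ((-1)^(c*(n+2)) * P0 (n + Suc c + 1) / Pc (n+2))"
    using rel[of c "n+2" Pc] n Dc by auto
  have t2: "tA (Suc c) n = \<rho> (Suc c) * ((-1)^(Suc c*n) * P0 (n + Suc c) / Pa n)"
    using rel[of "Suc c" n Pa] n Da by auto
  have t3: "tA c (n+1) = \<rho> c * ((-1)^(c*(n+1)) * P0 (n + Suc c) / Pc (n+1))"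
    using rel[of c "n+1" Pc] n Dc by auto
  have t4: "tA (Suc c) (n+1) = \<rho> (Suc c) * ((-1)^(Suc c*(n+1)) * P0 (n + Suc c + 1) / Pa (n+1))"
    using rel[of "Suc c" "n+1" Pa] n Da by auto
  have nN: "n < N" and n1N: "n + 1 < N" using n by auto
  have X: "Lc' * minv La = (Lc' * ?Ma) * Ua"
    using Fa(8) assoc_mult_mat[OF Fc(1) mat_carrier Fa(2)] by simp
  have shift: "(Lc' * ?Ma) $$ (n+1,t) = (Lc' * ?Mc) $$ (n+1,t+1)" if t: "t + 1 < N" for t
    using mult_entry[OF Fc(1) mat_carrier, of "n+1" t] mult_entry[OF Fc(1) mat_carrier, of "n+1" "t+1"] n1N t
    by simp
  have "(Lc' * minv La) $$ (n+1,n) = (\<Sum>t<N. (Lc' * ?Ma) $$ (n+1,t) * Ua $$ (t,n))"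
    unfolding X by (rule mult_entry[OF mult_carrier_mat[OF Fc(1) mat_carrier] Fa(2) n1N nN])
  also have "\<dots> = (Lc' * ?Ma) $$ (n+1,n) * Ua $$ (n,n)"
  proof (rule sum_single[OF nN])
    fix t assume t: "t < N" "t \<noteq> n"
    show "(Lc' * ?Ma) $$ (n+1,t) * Ua $$ (t,n) = 0"
    proof (cases "t < n")
      case True
      then have "(Lc' * ?Ma) $$ (n+1,t) = minv Uc' $$ (n+1,t+1)" using shift[of t] Fc(7) n by simp
      also have "\<dots> = 0" using Fc(10)[of "t+1" "n+1"] True n1N by simp
      finally show ?thesis by simp
    next
      case False
      then show ?thesis using Fa(5)[of n t] t by simp
    qed
  qed
  also have "(Lc' * ?Ma) $$ (n+1,n) = minv Uc' $$ (n+1,n+1)" using shift[of n] Fc(7) n1N by simp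
  also have "minv Uc' $$ (n+1,n+1) = 1 / Uc' $$ (n+1,n+1)"
    using Fc(11)[OF n1N] Fc(6)[OF n1N] by (simp add: eq_divide_eq)
  also have "Uc' $$ (n+1,n+1) = Pc (n+2) / Pc (n+1)" using Dc(3)[OF n1N] by simp
  also have "Ua $$ (n,n) = Pa (n+1) / Pa n" using Da(3)[OF nN] .
  also have "1 / (Pc (n+2) / Pc (n+1)) * (Pa (n+1) / Pa n) = (Pa (n+1) / Pa n) * (1 / (Pc (n+2) / Pc (n+1)))"
    by (simp add: ac_simps)
  also have "\<dots> = - (tA c (n+2) * tA (Suc c) n) / (tA c (n+1) * tA (Suc c) (n+1))"
    unfolding t1 t2 t3 t4
    by (rule algA) (use D0(2) Dc(2) Da(2) n \<rho> in auto)
  finally show ?thesis .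
qed

theorem mainTheorem1:
  fixes q p N :: nat
    and mup mum :: "nat \<Rightarrow> nat \<Rightarrow> real measure"
    and Lc Uc :: "nat \<Rightarrow> nat \<Rightarrow> real mat"
  assumes "q \<ge> 1" and "p \<ge> 1"
    and "signed_measure_matrix q p mup mum"
    and "gauss_borel N (moment_mat q p mup mum N N 0 0) (Lc 0 0) (Uc 0 0)"
    and "\<forall>b\<in>{1..q}. gauss_borel N (moment_mat q p mup mum N N b 0) (Lc b 0) (Uc b 0)"
    and "\<forall>a\<in>{1..p}. gauss_borel N (moment_mat q p mup mum N N 0 a) (Lc 0 a) (Uc 0 a)"
  shows "(\<forall>b\<in>{1..q}. \<forall>n < N - b.
            (minv (Uc b 0) * Uc (b - 1) 0) $$ (n, n) =
              - (tauB q N (Lc 0 0) (b - 1) n * tauB q N (Lc 0 0) b (n + 1)) /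
                (tauB q N (Lc 0 0) (b - 1) (n + 1) * tauB q N (Lc 0 0) b n))
       \<and> (\<forall>a\<in>{1..p}. \<forall>n < N - a.
            (Lc 0 (a - 1) * minv (Lc 0 a)) $$ (n + 1, n) =
              - (tauA p N (Uc 0 0) (a - 1) (n + 2) * tauA p N (Uc 0 0) a n) /
                (tauA p N (Uc 0 0) (a - 1) (n + 1) * tauA p N (Uc 0 0) a (n + 1)))"
proof -
  let ?G = "Gm q p mup mum"
  note ME = moment_entry[OF assms(1) assms(2)]
  have gbB: "gauss_borel N (mat N N (\<lambda>(i,j). ?G (i+b) j)) (Lc b 0) (Uc b 0)" if b: "b \<le> q" for b
  proof (cases "b = 0")
    case True
    then show ?thesis using assms(4) ME[where N=N and b=0 and a=0 and mup=mup and mum=mum] by simp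
  next
    case False
    then have "b \<in> {1..q}" using b by auto
    then have "gauss_borel N (moment_mat q p mup mum N N b 0) (Lc b 0) (Uc b 0)" using assms(5) by blast
    then show ?thesis using ME[where N=N and b=b and a=0 and mup=mup and mum=mum] by simp
  qed
  have gbA: "gauss_borel N (mat N N (\<lambda>(i,j). ?G i (j+a))) (Lc 0 a) (Uc 0 a)" if a: "a \<le> p" for a
  proof (cases "a = 0")
    case True
    then show ?thesis using assms(4) ME[where N=N and b=0 and a=0 and mup=mup and mum=mum] by simp
  next
    case False
    then have "a \<in> {1..p}" using a by auto
    then have "gauss_borel N (moment_mat q p mup mum N N 0 a) (Lc 0 a) (Uc 0 a)" using assms(6) by blast
    then show ?thesis using ME[where N=N and b=0 and a=a and mup=mup and mum=mum] by simp
  qed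
  have gb0: "gauss_borel N (mat N N (\<lambda>(i,j). ?G i j)) (Lc 0 0) (Uc 0 0)"
    using gbB[of 0] by simp
  note F0 = GB_facts[OF gb0 mat_carrier]
  have tBeq: "tauB q N (Lc 0 0) bb m = det (mat bb bb (\<lambda>(i,j). Lc 0 0 $$ (m+i,j)))"
    if bb: "bb \<le> q" and m: "m + bb \<le> N" for bb m
    unfolding tauB_def
    by (rule arg_cong[where f = det], rule eq_matI) (use bb m Bmat0[OF F0(1)] in auto)
  have "\<forall>a. \<exists>\<rho>::real. \<rho> \<noteq> 0 \<and> (\<forall>A::real mat. A \<in> carrier_mat a a \<longrightarrow>
     det (mat a a (\<lambda>(i,j). A $$ (i, a - 1 - j))) = \<rho> * det A)" using rev_det by blast
  from choice[OF this] obtain \<rho> :: "nat \<Rightarrow> real" where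
    \<rho>: "\<And>a. \<rho> a \<noteq> 0" and \<rho>A: "\<And>a A. A \<in> carrier_mat a a \<Longrightarrow>
     det (mat a a (\<lambda>(i,j). A $$ (i, a - 1 - j))) = \<rho> a * det A" by blast
  have tAeq: "tauA p N (Uc 0 0) aa m = \<rho> aa * det (mat aa aa (\<lambda>(i,j). Uc 0 0 $$ (i, m+j)))"
    if aa: "aa \<le> p" and m: "m + aa \<le> N" for aa m
  proof -
    have "tauA p N (Uc 0 0) aa m = det (mat aa aa (\<lambda>(i,j). Uc 0 0 $$ (i, m + aa - 1 - j)))"
      unfolding tauA_def
      by (rule arg_cong[where f = det], rule eq_matI) (use aa m Amat0[OF F0(2)] in auto)
    also have "mat aa aa (\<lambda>(i,j). Uc 0 0 $$ (i, m + aa - 1 - j))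
      = mat aa aa (\<lambda>(i,j). mat aa aa (\<lambda>(i,j). Uc 0 0 $$ (i, m+j)) $$ (i, aa - 1 - j))"
      by (rule eq_matI) auto
    also have "det \<dots> = \<rho> aa * det (mat aa aa (\<lambda>(i,j). Uc 0 0 $$ (i, m+j)))"
      by (rule \<rho>A) simp
    finally show ?thesis .
  qed
  show ?thesis
  proof (intro conjI ballI allI impI)
    fix b n assume b: "b \<in> {1..q}" and n: "n < N - b"
    then obtain c where bc: "b = Suc c" by (cases b) auto
    have "(minv (Uc (Suc c) 0) * Uc c 0) $$ (n, n) =
        - (tauB q N (Lc 0 0) c n * tauB q N (Lc 0 0) (Suc c) (n + 1)) /
          (tauB q N (Lc 0 0) c (n + 1) * tauB q N (Lc 0 0) (Suc c) n)"
      by (rule partB[OF gb0 gbB[of c] gbB[of "Suc c"]]) (use b bc n tBeq in auto)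
    then show "(minv (Uc b 0) * Uc (b - 1) 0) $$ (n, n) =
        - (tauB q N (Lc 0 0) (b - 1) n * tauB q N (Lc 0 0) b (n + 1)) /
          (tauB q N (Lc 0 0) (b - 1) (n + 1) * tauB q N (Lc 0 0) b n)" using bc by simp
  next
    fix a n assume a: "a \<in> {1..p}" and n: "n < N - a"
    then obtain c where ac: "a = Suc c" by (cases a) auto
    have "(Lc 0 c * minv (Lc 0 (Suc c))) $$ (n + 1, n) =
        - (tauA p N (Uc 0 0) c (n + 2) * tauA p N (Uc 0 0) (Suc c) n) /
          (tauA p N (Uc 0 0) c (n + 1) * tauA p N (Uc 0 0) (Suc c) (n + 1))"
      by (rule partA[OF gb0 gbA[of c] gbA[of "Suc c"], where \<rho> = \<rho>]) (use a ac n tAeq \<rho> in auto)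
    then show "(Lc 0 (a - 1) * minv (Lc 0 a)) $$ (n + 1, n) =
        - (tauA p N (Uc 0 0) (a - 1) (n + 2) * tauA p N (Uc 0 0) a n) /
          (tauA p N (Uc 0 0) (a - 1) (n + 1) * tauA p N (Uc 0 0) a (n + 1))" using ac by simp
  qed
qed

end
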